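(* Let $d>0$ be a constant, $k,b:\mathbb{R}_+\to\mathbb{R}_+$ measurable and bounded with $\int_0^{+\infty}k(a)da=+\infty$ and $1<\int_0^{+\infty}b(a)e^{-\int_0^ak(u)du}da<+\infty$. Let $\eta_1,\eta_2,c_1,c_2,\tilde c_1,\tilde c_2\ge0$, $c_1^{tot}=\eta_1+c_1>0$, $c_2^{tot}=\eta_2+c_2$. Consider the PDE–ODE system $$\partial_tn_1+\partial_an_1=-\big(k(a)+c_1^{tot}N_1(t)+c_2^{tot}N_2(t)\big)n_1,\qquad n_1(t,0)=\int_0^{+\infty}b(a)n_1(t,a)da,$$ $$\frac{dN_2}{dt}=-\big(d+\tilde c_1N_1+\tilde c_2N_2\big)N_2+\int_0^{+\infty}\big(k(a)+\eta_1N_1+\eta_2N_2\big)n_1(t,a)da,\qquad N_1(t)=\int_0^{+\infty}n_1(t,a)da.$$ Then this system has a unique non-trivial nonnegative steady state $(n_1^*,N_2^* )$ (with $n_1^*\in L^1(\mathbb{R}_+)$). Furthermore, if $d>0$ or $\tilde c_2>0$, then $N_1^*=\int_0^{+\infty}n_1^*(a)da>0$, and if $k\not\equiv0$ or $\eta_1>0$, then $N_2^*>0$.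
   Context: A steady state is a time-independent solution $(n_1^*(a),N_2^* )$; non-trivial means different from $(0,0)$. *)

theory Defs
  imports "HOL-Analysis.Analysis"
begin

definition tot :: "(real \<Rightarrow> real) \<Rightarrow> real" where
  "tot n1 = (\<integral>a\<in>{0..}. n1 a \<partial>lborel)"

text \<open>The age-transport equation  n1'(a) = -(k(a) + c1tot N1 + c2tot N2) n1(a)  is imposed in
  integrated (absolutely continuous) form on [0,infty), together with the renewal boundary
  condition and the stationary ODE for N2. Parameters: k b d eta1 eta2 c1 c2 ct1 ct2,
  where ct1, ct2 are tilde c1, tilde c2.\<close>
definition is_steady_state ::
  "(real \<Rightarrow> real) \<Rightarrow> (real \<Rightarrow> real) \<Rightarrow> real \<Rightarrow> real \<Rightarrow> real \<Rightarrow> real \<Rightarrow> real \<Rightarrow> real \<Rightarrow> real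
   \<Rightarrow> (real \<Rightarrow> real) \<Rightarrow> real \<Rightarrow> bool" where
  "is_steady_state k b d eta1 eta2 c1 c2 ct1 ct2 n1 N2 \<longleftrightarrow>
     set_integrable lborel {0..} n1 \<and>
     (\<forall>a\<ge>0. n1 a = n1 0 -
        (\<integral>u\<in>{0..a}. (k u + (eta1 + c1) * tot n1 + (eta2 + c2) * N2) * n1 u \<partial>lborel)) \<and>
     n1 0 = (\<integral>a\<in>{0..}. b a * n1 a \<partial>lborel) \<and>
     0 = - (d + ct1 * tot n1 + ct2 * N2) * N2
         + (\<integral>a\<in>{0..}. (k a + eta1 * tot n1 + eta2 * N2) * n1 a \<partial>lborel)"

definition nonneg_nontrivial :: "(real \<Rightarrow> real) \<Rightarrow> real \<Rightarrow> bool" where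
  "nonneg_nontrivial n1 N2 \<longleftrightarrow>
     (\<forall>a\<ge>0. n1 a \<ge> 0) \<and> N2 \<ge> 0 \<and> \<not> ((\<forall>a\<ge>0. n1 a = 0) \<and> N2 = 0)"

end

theory Submission
  imports Defs "HOL-Real_Asymp.Real_Asymp"
begin

lemma const_of_sq_bound:
  fixes f :: "real \<Rightarrow> real"
  assumes B: "\<And>x y. 0 \<le> x \<Longrightarrow> x \<le> y \<Longrightarrow> \<bar>f y - f x\<bar> \<le> C * (y - x)^2" and a: "0 \<le> a"
  shows "f a = f 0"
proof -
  have C0: "0 \<le> C" using B[of 0 1] by simp
  have bnd: "\<bar>f a - f 0\<bar> \<le> C * a^2 / real n" if n: "n \<ge> 1" for n :: nat
  proof -
    define h where "h = a / real n"
    have hn: "h * real n = a" using n by (simp add: h_def)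
    have h0: "0 \<le> h" using a by (simp add: h_def)
    have "f a - f 0 = (\<Sum>i<n. f (h * real (Suc i)) - f (h * real i))"
      by (subst sum_lessThan_telescope[where f="\<lambda>i. f (h * real i)"]) (simp add: hn)
    also have "\<bar>\<dots>\<bar> \<le> (\<Sum>i<n. \<bar>f (h * real (Suc i)) - f (h * real i)\<bar>)"
      by (rule sum_abs)
    also have "\<dots> \<le> (\<Sum>i<n. C * h^2)"
    proof (rule sum_mono)
      fix i assume "i \<in> {..<n}"
      have "\<bar>f (h * real (Suc i)) - f (h * real i)\<bar> \<le> C * (h * real (Suc i) - h * real i)^2"
        by (rule B) (use h0 in \<open>auto intro: mult_left_mono\<close>)
      also have "h * real (Suc i) - h * real i = h" by (simp add: algebra_simps)
      finally show "\<bar>f (h * real (Suc i)) - f (h * real i)\<bar> \<le> C * h^2" .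
    qed
    also have "\<dots> = C * a^2 / real n" using n by (simp add: h_def power2_eq_square field_simps)
    finally show ?thesis .
  qed
  show ?thesis
  proof (rule ccontr)
    assume ne: "f a \<noteq> f 0"
    then have z: "\<bar>f a - f 0\<bar> > 0" by simp
    obtain n :: nat where n: "n > C * a^2 / \<bar>f a - f 0\<bar>" using reals_Archimedean2 by blast
    have n1: "n \<ge> 1"
    proof -
      have "C * a^2 / \<bar>f a - f 0\<bar> \<ge> 0" using C0 z by simp
      with n show ?thesis by linarith
    qed
    have "C * a^2 < real n * \<bar>f a - f 0\<bar>" using n z by (simp add: field_simps)
    moreover have "\<bar>f a - f 0\<bar> * real n \<le> C * a^2" using bnd[OF n1] n1 by (simp add: field_simps)
    ultimately show False by (simp add: mult.commute)
  qed
qed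

lemma set_integrable_bdd_interval:
  fixes f :: "real \<Rightarrow> real"
  assumes "f \<in> borel_measurable borel" "\<And>x. \<bar>f x\<bar> \<le> M"
  shows "set_integrable lborel {x..y} f"
  unfolding set_integrable_def
  by (rule integrableI_bounded_set_indicator[where B=M]) (use assms in \<open>auto simp: emeasure_lborel_Icc_eq\<close>)

lemma LINT_Icc_eq_HK:
  fixes f :: "real \<Rightarrow> real"
  assumes "f \<in> borel_measurable borel" "\<And>x. \<bar>f x\<bar> \<le> M"
  shows "(LINT u:{x..y}|lborel. f u) = integral {x..y} f" "f integrable_on {x..y}"
  using set_borel_integral_eq_integral[OF set_integrable_bdd_interval[OF assms]] by auto

locale bddg =
  fixes g :: "real \<Rightarrow> real" and M :: real
  assumes gm[measurable]: "g \<in> borel_measurable borel"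
    and g0: "\<And>x. 0 \<le> g x" and gM: "\<And>x. g x \<le> M"
begin

definition G where "G a = (LINT u:{0..a}|lborel. g u)"

lemma gabs: "\<bar>g x\<bar> \<le> M" using g0[of x] gM[of x] by simp

lemma M0: "0 \<le> M" using g0[of 0] gM[of 0] by simp

lemma G_HK: "G a = integral {0..a} g"
  unfolding G_def by (rule LINT_Icc_eq_HK[OF gm gabs])

lemma g_int: "g integrable_on {x..y}"
  by (rule LINT_Icc_eq_HK[OF gm gabs])

lemma G_neg: "a \<le> 0 \<Longrightarrow> G a = 0"
  unfolding G_HK
  by (cases "a = 0") auto

lemma G_split: "0 \<le> x \<Longrightarrow> x \<le> y \<Longrightarrow> G y = G x + integral {x..y} g"
  unfolding G_HK using Henstock_Kurzweil_Integration.integral_combine[OF _ _ g_int, of 0 x y] by simp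

lemma D_nonneg: "0 \<le> integral {x..y} g"
  by (rule integral_nonneg[OF g_int]) (use g0 in auto)

lemma D_le: "x \<le> y \<Longrightarrow> integral {x..y} g \<le> M * (y - x)"
proof -
  assume xy: "x \<le> y"
  have "integral {x..y} g \<le> integral {x..y} (\<lambda>_. M)"
    by (rule integral_le[OF g_int]) (use gM in auto)
  also have "\<dots> = M * (y - x)" using xy by simp
  finally show ?thesis .
qed

lemma G_mono: "mono G"
proof (rule monoI)
  fix x y :: real assume xy: "x \<le> y"
  show "G x \<le> G y"
  proof (cases "x \<le> 0")
    case True
    have "0 \<le> G y"
    proof (cases "y \<le> 0")
      case True then show ?thesis by (simp add: G_neg)
    next
      case False then show ?thesis using G_split[of 0 y] G_neg[of 0] D_nonneg[of 0 y] by simp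
    qed
    then show ?thesis using True G_neg by simp
  next
    case False then show ?thesis using G_split[OF _ xy] D_nonneg[of x y] by simp
  qed
qed

lemma G_meas[measurable]: "G \<in> borel_measurable borel"
  by (rule borel_measurable_mono[OF G_mono])

definition h where "h u = g u * exp (- G u)"

lemma h_meas[measurable]: "h \<in> borel_measurable borel"
  unfolding h_def by measurable

lemma h_abs: "\<bar>h u\<bar> \<le> M"
proof -
  have "\<bar>h u\<bar> = g u * exp (- G u)" using g0[of u] by (simp add: h_def)
  also have "\<dots> \<le> g u * 1"
  proof (rule mult_left_mono)
    have "G 0 \<le> G u \<or> u \<le> 0" using G_mono by (auto simp: mono_def)
    then have "0 \<le> G u" using G_neg[of 0] G_neg[of u] by auto
    then show "exp (- G u) \<le> 1" by simp
  qed (use g0 in auto)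
  finally show ?thesis using gM[of u] by simp
qed

lemma h_int: "h integrable_on {x..y}"
  by (rule LINT_Icc_eq_HK[OF h_meas h_abs])

definition P where "P a = (LINT u:{0..a}|lborel. h u)"

lemma P_HK: "P a = integral {0..a} h"
  unfolding P_def by (rule LINT_Icc_eq_HK[OF h_meas h_abs])

lemma exp_bound1: "(0::real) \<le> D \<Longrightarrow> exp (- D) \<le> 1 - D + D^2"
proof -
  assume D: "0 \<le> D"
  have "1 + D \<le> exp D" by (rule exp_ge_add_one_self)
  then have "exp (- D) \<le> 1 / (1 + D)" using D by (simp add: exp_minus field_simps)
  also have "1 / (1 + D) \<le> 1 - D + D^2"
    using D by (simp add: field_simps power2_eq_square)
  finally show ?thesis .
qed

lemma H_bound:
  assumes x: "0 \<le> x" and xy: "x \<le> y"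
  shows "\<bar>(exp (- G y) + P y) - (exp (- G x) + P x)\<bar> \<le> M^2 * (y - x)^2"
proof -
  define D where "D = integral {x..y} g"
  define I where "I = integral {x..y} h"
  have GyD: "G y = G x + D" using G_split[OF x xy] by (simp add: D_def)
  have PyI: "P y = P x + I" unfolding P_HK I_def using Henstock_Kurzweil_Integration.integral_combine[OF _ _ h_int, of 0 x y] x xy by simp
  have D0: "0 \<le> D" using D_nonneg by (simp add: D_def)
  have DM: "D \<le> M * (y - x)" using D_le[OF xy] by (simp add: D_def)
  have Gmono: "G x \<le> G u" "G u \<le> G y" if "u \<in> {x..y}" for u
    using that G_mono by (auto simp: mono_def)
  have Iup: "I \<le> exp (- G x) * D"
  proof -
    have "I \<le> integral {x..y} (\<lambda>u. g u * exp (- G x))"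
      unfolding I_def
    proof (rule integral_le[OF h_int])
      show "(\<lambda>u. g u * exp (- G x)) integrable_on {x..y}" by (rule integrable_on_mult_left[OF g_int])
      fix u assume "u \<in> {x..y}" then show "h u \<le> g u * exp (- G x)"
        using Gmono[of u] g0[of u] by (auto simp: h_def intro!: mult_left_mono)
    qed
    then show ?thesis by (simp add: D_def mult.commute)
  qed
  have Ilo: "exp (- G y) * D \<le> I"
  proof -
    have "integral {x..y} (\<lambda>u. g u * exp (- G y)) \<le> I"
      unfolding I_def
    proof (rule integral_le[OF _ h_int])
      show "(\<lambda>u. g u * exp (- G y)) integrable_on {x..y}" by (rule integrable_on_mult_left[OF g_int])
      fix u assume "u \<in> {x..y}" then show "g u * exp (- G y) \<le> h u"
        using Gmono[of u] g0[of u] by (auto simp: h_def intro!: mult_left_mono)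
    qed
    then show ?thesis by (simp add: D_def mult.commute)
  qed
  define ex where "ex = exp (- G x)"
  have ex0: "0 < ex" "ex \<le> 1"
    using G_mono G_neg[of 0] x by (auto simp: ex_def mono_def) (metis order.refl)
  have ey: "exp (- G y) = ex * exp (- D)" by (simp add: GyD ex_def exp_add[symmetric])
  have e1: "exp (- D) \<le> 1 - D + D^2" by (rule exp_bound1[OF D0])
  have e2: "1 - D \<le> exp (- D)" using exp_ge_add_one_self[of "- D"] by simp
  have up: "(exp (- G y) + P y) - (exp (- G x) + P x) \<le> D^2"
  proof -
    have "(exp (- G y) + P y) - (exp (- G x) + P x) \<le> ex * exp (- D) - ex + ex * D"
      using Iup by (simp add: ey PyI ex_def)
    also have "\<dots> = ex * (exp (- D) - 1 + D)" by (simp add: algebra_simps)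
    also have "\<dots> \<le> ex * D^2" using e1 ex0 by (intro mult_left_mono) auto
    also have "\<dots> \<le> 1 * D^2" using ex0 by (intro mult_right_mono) simp_all
    finally show ?thesis by simp
  qed
  have lo: "- (D^2) \<le> (exp (- G y) + P y) - (exp (- G x) + P x)"
  proof -
    have "ex * (exp (- D) * (1 + D) - 1) \<le> (exp (- G y) + P y) - (exp (- G x) + P x)"
      using Ilo by (simp add: ey PyI ex_def algebra_simps)
    moreover have "(1 - D) * (1 + D) \<le> exp (- D) * (1 + D)" using e2 D0 by (intro mult_right_mono) auto
    then have "- (D^2) \<le> exp (- D) * (1 + D) - 1" by (simp add: algebra_simps power2_eq_square)
    then have "ex * (- (D^2)) \<le> ex * (exp (- D) * (1 + D) - 1)" using ex0 by (intro mult_left_mono) auto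
    moreover have "ex * D^2 \<le> 1 * D^2" using ex0 by (intro mult_right_mono) simp_all
    then have "- (D^2) \<le> ex * (- (D^2))" by simp
    ultimately show ?thesis by linarith
  qed
  have "D^2 \<le> (M * (y - x))^2" using D0 DM by (intro power_mono) auto
  then show ?thesis using up lo by (simp add: power_mult_distrib abs_le_iff)
qed

lemma exp_identity:
  assumes "0 \<le> a"
  shows "exp (- G a) = 1 - (LINT u:{0..a}|lborel. g u * exp (- G u))"
proof -
  have "exp (- G a) + P a = exp (- G 0) + P 0"
    by (rule const_of_sq_bound[where f="\<lambda>a. exp (- G a) + P a", OF H_bound assms])
  moreover have "G 0 = 0" "P 0 = 0" by (auto simp: G_neg P_HK)
  ultimately show ?thesis by (simp add: P_def h_def)
qed

end

lemma set_integrable_bdd_mult: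
  fixes f n :: "real \<Rightarrow> real"
  assumes n: "set_integrable lborel A n" and f[measurable]: "f \<in> borel_measurable borel"
    and fC: "\<And>x. \<bar>f x\<bar> \<le> C" and A[measurable]: "A \<in> sets borel"
  shows "set_integrable lborel A (\<lambda>x. f x * n x)"
proof (rule set_integrable_bound[where f="\<lambda>x. C * n x"])
  show "set_integrable lborel A (\<lambda>x. C * n x)" using n by (rule set_integrable_mult_right)
  have "(\<lambda>x. indicator A x *\<^sub>R n x) \<in> borel_measurable lborel"
    using n unfolding set_integrable_def by (rule borel_measurable_integrable)
  then have "(\<lambda>x. f x * (indicator A x *\<^sub>R n x)) \<in> borel_measurable borel" by simp
  then show "set_borel_measurable lborel A (\<lambda>x. f x * n x)"
    unfolding set_borel_measurable_def by (simp add: algebra_simps)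
  show "AE x in lborel. x \<in> A \<longrightarrow> norm (f x * n x) \<le> norm (C * n x)"
  proof (rule AE_I2, intro impI)
    fix x
    have "\<bar>f x\<bar> * \<bar>n x\<bar> \<le> C * \<bar>n x\<bar>" by (rule mult_right_mono[OF fC]) simp
    moreover have "0 \<le> C" using fC[of x] by simp
    ultimately show "norm (f x * n x) \<le> norm (C * n x)" by (simp add: abs_mult)
  qed
qed

lemma LINT_power:
  assumes "0 \<le> a"
  shows "(LINT u:{0..a}|lborel. u ^ j) = a ^ Suc j / Suc j"
  using integral_power[of 0 a j] assms
  by (simp add: set_lebesgue_integral_def mult.commute)

lemma set_integrable_power: "set_integrable lborel {0..a} (\<lambda>u::real. c * u ^ j)"
  by (rule borel_integrable_atLeastAtMost') (intro continuous_intros)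

lemma gronwall:
  fixes m :: "real \<Rightarrow> real"
  assumes mm[measurable]: "(\<lambda>x. indicator {0..} x * m x) \<in> borel_measurable borel"
    and Bd: "\<And>a. 0 \<le> a \<Longrightarrow> \<bar>m a\<bar> \<le> B"
    and rec: "\<And>a. 0 \<le> a \<Longrightarrow> \<bar>m a\<bar> \<le> M * (LINT u:{0..a}|lborel. \<bar>m u\<bar>)"
    and M0: "0 \<le> M"
    and a: "0 \<le> a"
  shows "m a = 0"
proof -
  have mint: "set_integrable lborel {0..a} (\<lambda>u. \<bar>m u\<bar>)" if "0 \<le> a" for a
  proof -
    have eq: "(\<lambda>x. indicator {0..a} x *\<^sub>R \<bar>m x\<bar>) = (\<lambda>x. indicator {0..a} x *\<^sub>R \<bar>indicator {0..} x * m x\<bar>)"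
      by (auto simp: indicator_def)
    show ?thesis unfolding set_integrable_def eq
    proof (rule integrableI_bounded_set_indicator[where B=B])
      show "(\<lambda>x. \<bar>indicator {0..} x * m x\<bar>) \<in> borel_measurable lborel" by simp
      show "AE x in lborel. x \<in> {0..a} \<longrightarrow> norm \<bar>indicator {0..} x * m x\<bar> \<le> B"
        using Bd by auto
    qed (use that in auto)
  qed
  have B0: "0 \<le> B" using Bd[of 0] by simp
  have ind: "\<forall>a\<ge>0. \<bar>m a\<bar> \<le> B * M ^ j * a ^ j / fact j" for j
  proof (induction j)
    case 0 then show ?case using Bd by simp
  next
    case (Suc j)
    show ?case
    proof (intro allI impI)
      fix a :: real assume a: "0 \<le> a"
      have "(LINT u:{0..a}|lborel. \<bar>m u\<bar>) \<le> (LINT u:{0..a}|lborel. (B * M ^ j / fact j) * u ^ j)"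
        by (rule set_integral_mono[OF mint[OF a] set_integrable_power]) (use Suc in auto)
      also have "\<dots> = (B * M ^ j / fact j) * (a ^ Suc j / Suc j)"
        by (simp only: set_integral_mult_right LINT_power[OF a])
      finally have "\<bar>m a\<bar> \<le> M * ((B * M ^ j / fact j) * (a ^ Suc j / Suc j))"
        using rec[OF a] M0 by (meson mult_left_mono order.trans)
      also have "\<dots> = B * M ^ Suc j * a ^ Suc j / fact (Suc j)"
        by (simp add: field_simps)
      finally show "\<bar>m a\<bar> \<le> B * M ^ Suc j * a ^ Suc j / fact (Suc j)" .
    qed
  qed
  have lim: "(\<lambda>j. B * (inverse (fact j) * (M * a) ^ j)) \<longlonglongrightarrow> B * 0"
    by (intro tendsto_mult tendsto_const summable_LIMSEQ_zero summable_exp)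
  show ?thesis
  proof (rule ccontr)
    assume "m a \<noteq> 0"
    then have "0 < \<bar>m a\<bar>" by simp
    from order_tendstoD(2)[OF lim, of "\<bar>m a\<bar>"] this
    obtain j where "B * (inverse (fact j) * (M * a) ^ j) < \<bar>m a\<bar>"
      by (auto simp: eventually_sequentially)
    moreover have "\<bar>m a\<bar> \<le> B * (inverse (fact j) * (M * a) ^ j)"
    proof -
      have "\<bar>m a\<bar> \<le> B * M ^ j * a ^ j / fact j" using ind[of j] a by blast
      also have "\<dots> = B * (inverse (fact j) * (M * a) ^ j)" by (simp add: power_mult_distrib field_simps)
      finally show ?thesis .
    qed
    ultimately show False by simp
  qed
qed

lemma set_integrable_meas:
  fixes n :: "real \<Rightarrow> real"
  assumes "set_integrable lborel A n"
  shows "(\<lambda>x. indicator A x * n x) \<in> borel_measurable borel"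
  using borel_measurable_integrable[OF assms[unfolded set_integrable_def]] by simp

lemma LINT_subset_le:
  fixes n :: "real \<Rightarrow> real"
  assumes "set_integrable lborel A n" "B \<subseteq> A" "B \<in> sets borel" "\<And>x. 0 \<le> n x"
  shows "(LINT x:B|lborel. n x) \<le> (LINT x:A|lborel. n x)"
proof -
  have iB: "set_integrable lborel B n" by (rule set_integrable_subset[OF assms(1)]) (use assms in auto)
  show ?thesis
    using iB assms(1) unfolding set_lebesgue_integral_def set_integrable_def
    by (intro integral_mono) (use assms in \<open>auto simp: indicator_def\<close>)
qed

context bddg
begin

lemma volterra_unique:
  fixes n :: "real \<Rightarrow> real"
  assumes ni: "set_integrable lborel {0..} n"
    and eq: "\<And>a. 0 \<le> a \<Longrightarrow> n a = n 0 - (LINT u:{0..a}|lborel. g u * n u)"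
    and a: "0 \<le> a"
  shows "n a = n 0 * exp (- G a)"
proof -
  define m where "m x = n x - n 0 * exp (- G x)" for x
  have G0: "0 \<le> G x" for x
  proof (cases "x \<le> 0")
    case True then show ?thesis using G_neg[of x] by simp
  next
    case False then show ?thesis using G_mono[unfolded mono_def, rule_format, of 0 x] G_neg[of 0] by simp
  qed
  have eG: "\<bar>exp (- G x)\<bar> \<le> 1" for x using G0[of x] by simp
  have nb: "set_integrable lborel {0..b} n" if "0 \<le> b" for b
    by (rule set_integrable_subset[OF ni]) auto
  have gn: "set_integrable lborel {0..b} (\<lambda>u. g u * n u)" if "0 \<le> b" for b
    by (rule set_integrable_bdd_mult[OF nb[OF that] gm gabs]) auto
  have hi: "set_integrable lborel {0..b} h" for b
    by (rule set_integrable_bdd_interval[OF h_meas h_abs])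
  have ei: "set_integrable lborel {0..b} (\<lambda>u. n 0 * exp (- G u))" for b
    by (rule set_integrable_bdd_interval[where M="\<bar>n 0\<bar>"]) (use eG in \<open>auto simp: abs_mult intro: mult_left_le\<close>)
  have mi: "set_integrable lborel {0..b} m" if "0 \<le> b" for b
    unfolding m_def by (rule set_integral_diff(1)[OF nb[OF that] ei])
  have gmi: "set_integrable lborel {0..b} (\<lambda>u. g u * m u)" if "0 \<le> b" for b
    by (rule set_integrable_bdd_mult[OF mi[OF that] gm gabs]) auto
  have mrec: "m b = - (LINT u:{0..b}|lborel. g u * m u)" if b: "0 \<le> b" for b
  proof -
    have "(LINT u:{0..b}|lborel. g u * m u) = (LINT u:{0..b}|lborel. g u * n u - n 0 * h u)"
      by (rule set_lebesgue_integral_cong) (auto simp: m_def h_def algebra_simps)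
    also have "\<dots> = (LINT u:{0..b}|lborel. g u * n u) - n 0 * (LINT u:{0..b}|lborel. h u)"
      using set_integral_diff(2)[OF gn[OF b] set_integrable_mult_right[where a="n 0", OF hi[of b]]] by simp
    moreover have "n 0 * exp (- G b) = n 0 - n 0 * (LINT u:{0..b}|lborel. h u)"
      using exp_identity[OF b] unfolding h_def by (simp add: right_diff_distrib)
    ultimately show ?thesis
      using eq[OF b] unfolding m_def by linarith
  qed
  have Bd: "\<bar>m b\<bar> \<le> 2 * \<bar>n 0\<bar> + M * (LINT x:{0..}|lborel. \<bar>n x\<bar>)" if b: "0 \<le> b" for b
  proof -
    have "\<bar>LINT u:{0..b}|lborel. g u * n u\<bar> \<le> (LINT u:{0..b}|lborel. \<bar>g u * n u\<bar>)"
      using set_integral_norm_bound[OF gn[OF b]] by simp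
    also have "\<dots> \<le> (LINT u:{0..b}|lborel. M * \<bar>n u\<bar>)"
      by (rule set_integral_mono[OF set_integrable_abs[OF gn[OF b]] set_integrable_mult_right[OF set_integrable_abs[OF nb[OF b]]]])
         (use gabs in \<open>auto simp: abs_mult intro: mult_right_mono\<close>)
    also have "\<dots> \<le> M * (LINT x:{0..}|lborel. \<bar>n x\<bar>)"
      unfolding set_integral_mult_right
      by (rule mult_left_mono[OF LINT_subset_le[OF set_integrable_abs[OF ni]] M0]) auto
    finally have "\<bar>n b\<bar> \<le> \<bar>n 0\<bar> + M * (LINT x:{0..}|lborel. \<bar>n x\<bar>)"
      using eq[OF b] by linarith
    moreover have "\<bar>n 0 * exp (- G b)\<bar> \<le> \<bar>n 0\<bar>"
      using eG[of b] by (simp add: abs_mult mult_left_le)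
    ultimately show ?thesis unfolding m_def by linarith
  qed
  have rec: "\<bar>m b\<bar> \<le> M * (LINT u:{0..b}|lborel. \<bar>m u\<bar>)" if b: "0 \<le> b" for b
  proof -
    have "\<bar>m b\<bar> \<le> (LINT u:{0..b}|lborel. \<bar>g u * m u\<bar>)"
      using set_integral_norm_bound[OF gmi[OF b]] mrec[OF b] by simp
    also have "\<dots> \<le> (LINT u:{0..b}|lborel. M * \<bar>m u\<bar>)"
      by (rule set_integral_mono[OF set_integrable_abs[OF gmi[OF b]] set_integrable_mult_right[OF set_integrable_abs[OF mi[OF b]]]])
         (use gabs in \<open>auto simp: abs_mult intro: mult_right_mono\<close>)
    finally show ?thesis by simp
  qed
  have mm: "(\<lambda>x. indicator {0..} x * m x) \<in> borel_measurable borel"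
  proof -
    have "(\<lambda>x. indicator {0..} x * n x - n 0 * (indicator {0..} x * exp (- G x))) \<in> borel_measurable borel"
      using set_integrable_meas[OF ni] by measurable
    then show ?thesis by (simp add: m_def algebra_simps)
  qed
  have "m a = 0" by (rule gronwall[OF mm Bd rec M0 a])
  then show ?thesis by (simp add: m_def)
qed

end

lemma exp_set_integrable:
  fixes l :: real assumes l: "0 < l"
  shows "set_integrable lborel {0..} (\<lambda>x. exp (- l * x))"
proof -
  have "(\<lambda>x. exp (- l * x)) integrable_on {0..}" by (rule integrable_on_exp_minus_to_infinity[OF l])
  then have "set_integrable lebesgue {0..} (\<lambda>x. exp (- l * x))"
    by (rule nonnegative_absolutely_integrable_1) simp
  then show ?thesis unfolding set_integrable_def
    by (subst (asm) integrable_completion) auto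
qed

lemma exp_lim: "0 < (l::real) \<Longrightarrow> ((\<lambda>b. exp (- l * b)) \<longlongrightarrow> 0) at_top"
  by real_asymp

context bddg
begin

lemma G_nonneg: "0 \<le> G x"
proof (cases "x \<le> 0")
  case True then show ?thesis using G_neg[of x] by simp
next
  case False then show ?thesis using G_mono[unfolded mono_def, rule_format, of 0 x] G_neg[of 0] by simp
qed

lemma G_lower:
  assumes "\<And>x. l \<le> g x" "0 \<le> a"
  shows "l * a \<le> G a"
proof -
  have "integral {0..a} (\<lambda>_. l) \<le> integral {0..a} g"
    by (rule integral_le[OF _ g_int]) (use assms in auto)
  then show ?thesis using assms(2) by (simp add: G_HK mult.commute)
qed

lemma tail:
  assumes l: "0 < l" and lg: "\<And>x. l \<le> g x"
  shows "set_integrable lborel {0..} (\<lambda>a. exp (- G a))"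
    and "set_integrable lborel {0..} h"
    and "(LINT a:{0..}|lborel. h a) = 1"
proof -
  have bnd: "exp (- G a) \<le> exp (- l * a)" if "0 \<le> a" for a
    using G_lower[OF lg that] by simp
  show ie: "set_integrable lborel {0..} (\<lambda>a. exp (- G a))"
  proof (rule set_integrable_bound[OF exp_set_integrable[OF l]])
    show "set_borel_measurable lborel {0..} (\<lambda>a. exp (- G a))"
      unfolding set_borel_measurable_def by measurable
    show "AE x in lborel. x \<in> {0..} \<longrightarrow> norm (exp (- G x)) \<le> norm (exp (- l * x))"
      using bnd by auto
  qed
  show ih: "set_integrable lborel {0..} h"
    unfolding h_def by (rule set_integrable_bdd_mult[OF ie gm gabs]) auto
  have t1: "((\<lambda>b. LINT a:{0..b}|lborel. h a) \<longlongrightarrow> (LINT a:{0..}|lborel. h a)) at_top"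
    by (rule tendsto_set_lebesgue_integral_at_top[OF _ ih]) auto
  have t0: "((\<lambda>b. exp (- G b)) \<longlongrightarrow> 0) at_top"
  proof (rule tendsto_sandwich[OF _ _ tendsto_const exp_lim[OF l]])
    show "eventually (\<lambda>b. 0 \<le> exp (- G b)) at_top" by simp
    show "eventually (\<lambda>b. exp (- G b) \<le> exp (- l * b)) at_top"
      using eventually_ge_at_top[of "0::real"] by (rule eventually_mono) (rule bnd)
  qed
  have "eventually (\<lambda>b. (LINT a:{0..b}|lborel. h a) = 1 - exp (- G b)) at_top"
    using eventually_ge_at_top[of 0]
    by (rule eventually_mono) (simp add: exp_identity h_def)
  then have t2: "((\<lambda>b. LINT a:{0..b}|lborel. h a) \<longlongrightarrow> 1 - 0) at_top"
    by (rule tendsto_cong[THEN iffD2]) (intro tendsto_diff tendsto_const t0)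
  show "(LINT a:{0..}|lborel. h a) = 1"
    using tendsto_unique[OF _ t1 t2] by simp
qed

end

lemma exp_seq_lim: "0 < (x::real) \<Longrightarrow> (\<lambda>i. exp (- real i * x)) \<longlonglongrightarrow> 0"
  by real_asymp

locale Rfun =
  fixes w :: "real \<Rightarrow> real"
  assumes wm[measurable]: "w \<in> borel_measurable borel" and w0: "\<And>x. 0 \<le> w x"
    and wi: "set_integrable lborel {0..} w" and w1: "1 < (LINT x:{0..}|lborel. w x)"
begin

definition W where "W a = indicator {0..} a * w a"
definition F where "F l = (LINT a:{0..}|lborel. w a * exp (- l * a))"

lemma W_int: "integrable lborel W"
  using wi unfolding set_integrable_def W_def by simp

lemma W_meas[measurable]: "W \<in> borel_measurable borel"
  unfolding W_def by measurable

lemma W0: "0 \<le> W a" by (simp add: W_def w0)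

lemma F_eq: "F l = (\<integral>a. W a * exp (- l * a) \<partial>lborel)"
  unfolding F_def set_lebesgue_integral_def W_def by (simp add: mult.assoc)

lemma F0: "F 0 = (LINT x:{0..}|lborel. w x)"
  unfolding F_def by simp

lemma W_bound: "0 \<le> l \<Longrightarrow> \<bar>W a * exp (- l * a)\<bar> \<le> W a"
proof (cases "0 \<le> a")
  case True
  assume l: "0 \<le> l"
  have "exp (- l * a) \<le> 1" using l True by (simp add: mult_nonneg_nonneg)
  then have "W a * exp (- l * a) \<le> W a" using W0[of a] by (simp add: mult_left_le)
  then show ?thesis using W0[of a] by (simp add: abs_mult)
qed (simp add: W_def)

lemma F_int: "0 \<le> l \<Longrightarrow> integrable lborel (\<lambda>a. W a * exp (- l * a))"
  by (rule Bochner_Integration.integrable_bound[OF W_int]) (use W_bound W0 in auto)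

lemma F_set_int: "0 \<le> l \<Longrightarrow> set_integrable lborel {0..} (\<lambda>a. w a * exp (- l * a))"
  using F_int unfolding set_integrable_def W_def by (simp add: mult.assoc)

lemma F_seq:
  assumes X: "\<And>i. 0 \<le> X i" "X \<longlonglongrightarrow> l"
  shows "(\<lambda>i. F (X i)) \<longlonglongrightarrow> F l"
  unfolding F_eq
proof (rule integral_dominated_convergence[where w=W])
  show "AE x in lborel. (\<lambda>i. W x * exp (- X i * x)) \<longlonglongrightarrow> W x * exp (- l * x)"
    by (intro AE_I2 tendsto_intros X)
  show "AE x in lborel. norm (W x * exp (- X i * x)) \<le> W x" for i
    using W_bound[OF X(1)] by auto
qed (auto simp: W_int)

lemma F_cont: "continuous_on {0..} F"
  unfolding continuous_on_sequentially
proof (intro allI ballI impI)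
  fix x :: "nat \<Rightarrow> real" and a assume "a \<in> {0..}" "(\<forall>n. x n \<in> {0..}) \<and> x \<longlonglongrightarrow> a"
  then show "(F \<circ> x) \<longlonglongrightarrow> F a" using F_seq[of x a] by (auto simp: o_def)
qed

lemma F_lim0: "(\<lambda>i. F (real i)) \<longlonglongrightarrow> 0"
proof -
  have "(\<lambda>i. \<integral>a. W a * exp (- real i * a) \<partial>lborel) \<longlonglongrightarrow> (\<integral>(a::real). (0::real) \<partial>lborel)"
  proof (rule integral_dominated_convergence[where w=W and f="\<lambda>_. 0" and s="\<lambda>i a. W a * exp (- real i * a)"])
    show "AE x in lborel. (\<lambda>i. W x * exp (- real i * x)) \<longlonglongrightarrow> 0"
      using AE_lborel_singleton[of 0]
    proof (rule AE_mp, intro AE_I2 impI)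
      fix x :: real assume "x \<noteq> 0"
      show "(\<lambda>i. W x * exp (- real i * x)) \<longlonglongrightarrow> 0"
      proof (cases "x > 0")
        case True
        then show ?thesis using tendsto_mult[OF tendsto_const exp_seq_lim[OF True], of "W x"] by simp
      next
        case False then have "x < 0" using \<open>x \<noteq> 0\<close> by simp
        then show ?thesis by (simp add: W_def)
      qed
    qed
    show "AE x in lborel. norm (W x * exp (- real i * x)) \<le> W x" for i
      using W_bound[of "real i"] by auto
  qed (auto simp: W_int)
  then show ?thesis unfolding F_eq by simp
qed

lemma F_strict:
  assumes l: "0 \<le> l1" "l1 < l2"
  shows "F l2 < F l1"
proof -
  let ?d = "\<lambda>a. W a * exp (- l1 * a) - W a * exp (- l2 * a)"
  have di: "integrable lborel ?d" using F_int l by auto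
  have dnn: "0 \<le> ?d a" for a
  proof (cases "0 \<le> a")
    case True
    then have "exp (- l2 * a) \<le> exp (- l1 * a)" using l by (simp add: mult_right_mono)
    then show ?thesis using W0[of a] by (simp add: mult_left_mono)
  qed (simp add: W_def)
  have "F l1 - F l2 = integral\<^sup>L lborel ?d" unfolding F_eq using F_int l by simp
  moreover have "integral\<^sup>L lborel ?d \<noteq> 0"
  proof
    assume "integral\<^sup>L lborel ?d = 0"
    then have ae: "AE a in lborel. ?d a = 0"
      using integral_nonneg_eq_0_iff_AE[OF di] dnn by simp
    have "AE a in lborel. W a = 0"
      using AE_lborel_singleton[of 0] ae
    proof (eventually_elim)
      case (elim a)
      show ?case
      proof (cases "0 < a")
        case True
        then have "exp (- l2 * a) < exp (- l1 * a)" using l by simp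
        then show ?thesis using elim l by (simp add: right_diff_distrib[symmetric])
      next
        case False then show ?thesis using elim by (simp add: W_def)
      qed
    qed
    then have "integral\<^sup>L lborel W = integral\<^sup>L lborel (\<lambda>_::real. 0::real)"
      by (intro integral_cong_AE) auto
    moreover have "integral\<^sup>L lborel W = (LINT x:{0..}|lborel. w x)"
      unfolding W_def set_lebesgue_integral_def by simp
    ultimately show False using w1 by simp
  qed
  moreover have "0 \<le> integral\<^sup>L lborel ?d" using dnn by simp
  ultimately show ?thesis by linarith
qed

lemma F_root: "\<exists>l. 0 < l \<and> F l = 1"
proof -
  obtain N where N: "F (real N) < 1"
    using order_tendstoD(2)[OF F_lim0, of 1] by (auto simp: eventually_sequentially)
  have "\<exists>x. 0 \<le> x \<and> x \<le> real N \<and> F x = 1"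
    by (rule IVT2'[of F "real N" 1 0]) (use N F0 w1 continuous_on_subset[OF F_cont] in auto)
  then obtain x where "0 \<le> x" "F x = 1" by auto
  moreover have "x \<noteq> 0" using \<open>F x = 1\<close> F0 w1 by auto
  ultimately show ?thesis by (intro exI[of _ x]) auto
qed

lemma F_inj: "0 \<le> l1 \<Longrightarrow> 0 \<le> l2 \<Longrightarrow> F l1 = F l2 \<Longrightarrow> l1 = l2"
  using F_strict by (metis linorder_neq_iff order.irrefl)

end

locale quad =
  fixes c1 c2 lam A d eta1 eta2 ct1 ct2 :: real
  assumes c1: "0 < c1" and c2: "0 \<le> c2" and lam: "0 < lam" and A: "0 < A" and d: "0 < d"
    and e1: "0 \<le> eta1" and e2: "0 \<le> eta2" and t1: "0 \<le> ct1" and t2: "0 \<le> ct2"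
    and e2c2: "eta2 \<le> c2"
begin

definition Phi where "Phi x y = (d + ct1 * x + ct2 * y) * y - A * x - (eta1 * x + eta2 * y) * x"
definition al where "al = ct2 - (ct1 - eta2) * c2 / c1 - eta1 * c2^2 / c1^2"
definition be where "be = d + (ct1 - eta2) * lam / c1 + A * c2 / c1 + 2 * eta1 * lam * c2 / c1^2"
definition ga where "ga = - A * lam / c1 - eta1 * lam^2 / c1^2"
definition q where "q y = al * y^2 + be * y + ga"

lemma Phi_q: "c1 * x + c2 * y = lam \<Longrightarrow> Phi x y = q y"
proof -
  assume "c1 * x + c2 * y = lam"
  then have x: "x = (lam - c2 * y) / c1" using c1 by (simp add: field_simps)
  show ?thesis unfolding x Phi_def q_def al_def be_def ga_def using c1
    by (simp add: field_simps power2_eq_square)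
qed

lemma ga_neg: "ga < 0"
proof -
  have "0 < A * lam / c1" using A lam c1 by simp
  moreover have "0 \<le> eta1 * lam^2 / c1^2" using e1 by simp
  ultimately show ?thesis unfolding ga_def by linarith
qed

lemma q_cont: "continuous_on S q"
  unfolding q_def by (intro continuous_intros)

lemma exists: "\<exists>x y. 0 < x \<and> 0 < y \<and> c1 * x + c2 * y = lam \<and> Phi x y = 0"
proof (cases "c2 = 0")
  case True
  then have "eta2 = 0" using e2 e2c2 by simp
  moreover have "0 \<le> ct1 * lam / c1" using t1 lam c1 by simp
  ultimately have be: "0 < be" "al = ct2" using True d unfolding be_def al_def by simp_all
  define Y where "Y = - ga / be"
  have Y: "0 < Y" using ga_neg be by (simp add: Y_def field_simps)
  have "q Y = al * Y^2" using be by (simp add: q_def Y_def field_simps)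
  then have qY: "0 \<le> q Y" using be t2 by simp
  obtain y where y: "0 \<le> y" "y \<le> Y" "q y = 0"
    using IVT'[of q 0 0 Y] ga_neg qY Y q_cont by (auto simp: q_def)
  have "y \<noteq> 0" using y ga_neg by (auto simp: q_def)
  then show ?thesis using y True lam c1 Phi_q[of "lam / c1" y]
    by (intro exI[of _ "lam / c1"] exI[of _ y]) auto
next
  case False
  then have c2p: "0 < c2" using c2 by simp
  define Y where "Y = lam / c2"
  have Y: "0 < Y" using lam c2p by (simp add: Y_def)
  have "q Y = Phi 0 Y" using Phi_q[of 0 Y] c2p by (simp add: Y_def)
  moreover have "0 < (d + ct2 * Y) * Y" using Y d t2 by (simp add: add_pos_nonneg)
  ultimately have qY: "0 < q Y" by (simp add: Phi_def)
  obtain y where y: "0 \<le> y" "y \<le> Y" "q y = 0"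
    using IVT'[of q 0 0 Y] ga_neg qY Y q_cont by (auto simp: q_def)
  have y0: "y \<noteq> 0" using y ga_neg by (auto simp: q_def)
  have yY: "y \<noteq> Y" using y qY by auto
  define x where "x = (lam - c2 * y) / c1"
  have "c2 * y < lam" using y yY c2p by (simp add: Y_def field_simps)
  then have "0 < x" using c1 by (simp add: x_def)
  moreover have "c1 * x + c2 * y = lam" using c1 by (simp add: x_def)
  ultimately show ?thesis using y y0 Phi_q[of x y] by (intro exI[of _ x] exI[of _ y]) auto
qed

lemma unique_y:
  assumes y: "0 \<le> y" "y < y'" and qy: "q y = 0" "q y' = 0" and x': "c2 * y' \<le> lam"
  shows False
proof -
  have "al * (y^2 - y'^2) + be * (y - y') = 0" using qy by (simp add: q_def algebra_simps)
  then have "(y - y') * (al * (y + y') + be) = 0" by (simp add: algebra_simps power2_eq_square)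
  then have h1: "al * (y + y') + be = 0" using y by simp
  then have beq: "be = - al * (y + y')" by simp
  have h2: "ga = al * y * y'" using qy(1) beq by (simp add: q_def power2_eq_square algebra_simps)
  have qs: "q s = al * (s - y) * (s - y')" for s
    by (simp only: q_def beq h2) (simp add: power2_eq_square algebra_simps)
  have "y \<noteq> 0" using h2 ga_neg by auto
  then have yp: "0 < y" using y by simp
  have aln: "al < 0"
  proof (rule ccontr)
    assume "\<not> al < 0"
    then have "0 \<le> al * y * y'" using yp y by simp
    then show False using h2 ga_neg by simp
  qed
  show False
  proof (cases "c2 = 0")
    case True
    then show False using aln t2 unfolding al_def by simp
  next
    case False
    then have c2p: "0 < c2" using c2 by simp
    define Y where "Y = lam / c2"
    have "q Y = Phi 0 Y" using Phi_q[of 0 Y] c2p by (simp add: Y_def)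
    moreover have "0 < Y" using lam c2p by (simp add: Y_def)
    moreover have "0 < (d + ct2 * Y) * Y" using \<open>0 < Y\<close> d t2 by (simp add: add_pos_nonneg)
    ultimately have qY: "0 < q Y" by (simp add: Phi_def)
    have "y' \<le> Y" using x' c2p by (simp add: Y_def field_simps)
    then have "0 \<le> (Y - y) * (Y - y')" using y by simp
    then have "al * ((Y - y) * (Y - y')) \<le> 0" using aln by (simp add: mult_nonpos_nonneg)
    then show False using qY qs[of Y] by (simp add: mult.assoc)
  qed
qed

lemma unique:
  assumes "0 \<le> x" "0 \<le> y" "c1 * x + c2 * y = lam" "Phi x y = 0"
    and "0 \<le> x'" "0 \<le> y'" "c1 * x' + c2 * y' = lam" "Phi x' y' = 0"
  shows "x = x' \<and> y = y'"
proof -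
  have qy: "q y = 0" "q y' = 0" using assms Phi_q by auto
  have "0 \<le> c1 * x" "0 \<le> c1 * x'" using assms c1 by simp_all
  then have l1: "c2 * y \<le> lam" "c2 * y' \<le> lam" using assms by linarith+
  have "y = y'"
    using unique_y[of y y'] unique_y[of y' y] assms qy l1 by (metis linorder_neq_iff)
  then have "c1 * x = lam - c2 * y'" using assms(3) by simp
  moreover have "c1 * x' = lam - c2 * y'" using assms(7) by simp
  ultimately have "c1 * x = c1 * x'" by simp
  then show ?thesis using c1 \<open>y = y'\<close> by auto
qed

end

lemma one_less_ennreal: "1 < ennreal x \<Longrightarrow> 1 < x"
  using ennreal_less_iff[of 1 x] by simp

locale model =
  fixes k b :: "real \<Rightarrow> real" and Mk Mb :: real
  assumes km[measurable]: "k \<in> borel_measurable borel" and k0: "\<And>x. 0 \<le> k x" and kM: "\<And>x. k x \<le> Mk"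
    and bm[measurable]: "b \<in> borel_measurable borel" and b0: "\<And>x. 0 \<le> b x" and bM: "\<And>x. b x \<le> Mb"
    and k_int: "(\<integral>\<^sup>+a\<in>{0..}. ennreal (k a) \<partial>lborel) = \<infinity>"
    and R0_gt: "1 < (\<integral>\<^sup>+a\<in>{0..}. ennreal (b a * exp (- (\<integral>u\<in>{0..a}. k u \<partial>lborel))) \<partial>lborel)"
    and R0_fin: "(\<integral>\<^sup>+a\<in>{0..}. ennreal (b a * exp (- (\<integral>u\<in>{0..a}. k u \<partial>lborel))) \<partial>lborel) < \<infinity>"
begin

interpretation kb: bddg k Mk by unfold_locales (auto simp: k0 kM)

definition K where "K a = (LINT u:{0..a}|lborel. k u)"

lemma K_G: "K = kb.G" by (simp add: K_def kb.G_def fun_eq_iff)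

lemma K_meas[measurable]: "K \<in> borel_measurable borel" using kb.G_meas by (simp add: K_G)

lemma K0: "K 0 = 0" using kb.G_neg[of 0] by (simp add: K_G)

definition w where "w a = b a * exp (- K a)"

lemma w_meas[measurable]: "w \<in> borel_measurable borel" unfolding w_def by measurable

lemma w0: "0 \<le> w a" unfolding w_def using b0 by simp

lemma w_facts: "set_integrable lborel {0..} w" "1 < (LINT x:{0..}|lborel. w x)"
proof -
  let ?f = "\<lambda>a. indicator {0..} a * w a"
  have eq: "(\<integral>\<^sup>+a\<in>{0..}. ennreal (b a * exp (- (\<integral>u\<in>{0..a}. k u \<partial>lborel))) \<partial>lborel)
      = (\<integral>\<^sup>+a. ennreal (?f a) \<partial>lborel)"
    by (rule nn_integral_cong) (auto simp: w_def K_def indicator_def)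
  have int: "integrable lborel ?f"
    by (rule integrableI_nonneg) (use R0_fin eq w0 in auto)
  then show "set_integrable lborel {0..} w" unfolding set_integrable_def by simp
  have "(\<integral>\<^sup>+a. ennreal (?f a) \<partial>lborel) = ennreal (integral\<^sup>L lborel ?f)"
    by (rule nn_integral_eq_integral[OF int]) (use w0 in auto)
  then have "1 < integral\<^sup>L lborel ?f" using R0_gt eq one_less_ennreal by auto
  then show "1 < (LINT x:{0..}|lborel. w x)" unfolding set_lebesgue_integral_def by simp
qed

sublocale rf: Rfun w
  by unfold_locales (use w0 w_facts in auto)

definition E where "E l a = exp (- (K a + l * a))"

lemma bddg_l: "0 \<le> l \<Longrightarrow> bddg (\<lambda>u. k u + l) (Mk + l)"
  by unfold_locales (auto simp: k0 kM add_nonneg_nonneg)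

lemma G_eq:
  assumes l: "0 \<le> l" and a: "0 \<le> a"
  shows "bddg.G (\<lambda>u. k u + l) a = K a + l * a"
proof -
  have "bddg.G (\<lambda>u. k u + l) a = (LINT u:{0..a}|lborel. k u + l)"
    by (simp add: bddg.G_def[OF bddg_l[OF l]])
  also have "\<dots> = K a + (LINT u:{0..a}|lborel. l)"
    unfolding K_def
    by (rule set_integral_add(2)[OF set_integrable_bdd_interval[OF km kb.gabs]
          set_integrable_bdd_interval[where M="\<bar>l\<bar>"]]) auto
  also have "(LINT u:{0..a}|lborel. l) = l * a"
    using a by (subst set_integral_const) auto
  finally show ?thesis .
qed

lemma E0: "E l 0 = 1" by (simp add: E_def K0)

lemma E_pos: "0 < E l a" by (simp add: E_def)

lemma E_meas[measurable]: "E l \<in> borel_measurable borel" unfolding E_def by measurable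

lemma E_ident:
  assumes l: "0 \<le> l" and a: "0 \<le> a"
  shows "E l a = 1 - (LINT u:{0..a}|lborel. (k u + l) * E l u)"
proof -
  interpret gl: bddg "\<lambda>u. k u + l" "Mk + l" by (rule bddg_l[OF l])
  have "(LINT u:{0..a}|lborel. (k u + l) * E l u) = (LINT u:{0..a}|lborel. (k u + l) * exp (- gl.G u))"
    by (rule set_lebesgue_integral_cong) (auto simp: E_def G_eq[OF l])
  then show ?thesis using gl.exp_identity[OF a] by (simp add: E_def G_eq[OF l a])
qed

lemma E_unique:
  assumes l: "0 \<le> l" and ni: "set_integrable lborel {0..} n"
    and eq: "\<And>a. 0 \<le> a \<Longrightarrow> n a = n 0 - (LINT u:{0..a}|lborel. (k u + l) * n u)"
    and a: "0 \<le> a"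
  shows "n a = n 0 * E l a"
proof -
  interpret gl: bddg "\<lambda>u. k u + l" "Mk + l" by (rule bddg_l[OF l])
  show ?thesis using gl.volterra_unique[OF ni eq a] by (simp add: E_def G_eq[OF l a])
qed

lemma E_tail:
  assumes l: "0 < l"
  shows "set_integrable lborel {0..} (E l)"
    and "set_integrable lborel {0..} (\<lambda>a. (k a + l) * E l a)"
    and "(LINT a:{0..}|lborel. (k a + l) * E l a) = 1"
proof -
  interpret gl: bddg "\<lambda>u. k u + l" "Mk + l" by (rule bddg_l) (use l in simp)
  have lg: "\<And>x. l \<le> k x + l" using k0 by simp
  note t = gl.tail[OF l lg]
  have c1: "set_integrable lborel {0..} (E l) = set_integrable lborel {0..} (\<lambda>a. exp (- gl.G a))"
    by (rule set_integrable_cong) (use l in \<open>auto simp: E_def G_eq\<close>)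
  show "set_integrable lborel {0..} (E l)" using t(1) c1 by simp
  have c2: "set_integrable lborel {0..} (\<lambda>a. (k a + l) * E l a) = set_integrable lborel {0..} gl.h"
    by (rule set_integrable_cong) (use l in \<open>auto simp: E_def G_eq gl.h_def\<close>)
  show "set_integrable lborel {0..} (\<lambda>a. (k a + l) * E l a)" using t(2) c2 by simp
  have "(LINT a:{0..}|lborel. (k a + l) * E l a) = (LINT a:{0..}|lborel. gl.h a)"
    by (rule set_lebesgue_integral_cong) (use l in \<open>auto simp: E_def G_eq gl.h_def\<close>)
  then show "(LINT a:{0..}|lborel. (k a + l) * E l a) = 1" using t(3) by simp
qed

definition I where "I l = (LINT a:{0..}|lborel. E l a)"

lemma kE_int: "0 < l \<Longrightarrow> set_integrable lborel {0..} (\<lambda>a. k a * E l a)"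
  by (rule set_integrable_bdd_mult[OF E_tail(1) km kb.gabs]) auto

lemma kE_eq: "0 < l \<Longrightarrow> (LINT a:{0..}|lborel. k a * E l a) = 1 - l * I l"
proof -
  assume l: "0 < l"
  have "1 = (LINT a:{0..}|lborel. k a * E l a + l * E l a)"
    using E_tail(3)[OF l] by (simp add: algebra_simps)
  also have "\<dots> = (LINT a:{0..}|lborel. k a * E l a) + l * I l"
    using set_integral_add(2)[OF kE_int[OF l] set_integrable_mult_right[OF E_tail(1)[OF l]]]
    by (simp add: I_def)
  finally show ?thesis by simp
qed

lemma I_pos: "0 < l \<Longrightarrow> 0 < I l"
proof -
  assume l: "0 < l"
  have "1 = (LINT a:{0..}|lborel. (k a + l) * E l a)" using E_tail(3)[OF l] by simp
  also have "\<dots> \<le> (LINT a:{0..}|lborel. (Mk + l) * E l a)"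
    by (rule set_integral_mono[OF E_tail(2)[OF l] set_integrable_mult_right[OF E_tail(1)[OF l]]])
       (use kM E_pos in \<open>auto intro: mult_right_mono\<close>)
  also have "\<dots> = (Mk + l) * I l" by (simp add: I_def)
  finally have "1 \<le> (Mk + l) * I l" .
  moreover have "0 \<le> I l" unfolding I_def set_lebesgue_integral_def
    by (rule Bochner_Integration.integral_nonneg) (auto simp: E_pos less_imp_le)
  ultimately show ?thesis by (cases "I l = 0") auto
qed

lemma kE_pos: "0 < l \<Longrightarrow> 0 < (LINT a:{0..}|lborel. k a * E l a)"
proof -
  assume l: "0 < l"
  let ?f = "\<lambda>a. indicator {0..} a * (k a * E l a)"
  have fi: "integrable lborel ?f" using kE_int[OF l] unfolding set_integrable_def by simp
  have f0: "0 \<le> ?f a" for a using k0[of a] E_pos[of l a] by simp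
  have nn: "0 \<le> integral\<^sup>L lborel ?f" using f0 by simp
  have "integral\<^sup>L lborel ?f \<noteq> 0"
  proof
    assume "integral\<^sup>L lborel ?f = 0"
    then have ae: "AE a in lborel. ?f a = 0" using integral_nonneg_eq_0_iff_AE[OF fi] f0 by simp
    have "(\<integral>\<^sup>+a\<in>{0..}. ennreal (k a) \<partial>lborel) = (\<integral>\<^sup>+(a::real). 0 \<partial>lborel)"
    proof (rule nn_integral_cong_AE)
      show "AE x in lborel. ennreal (k x) * indicator {0..} x = 0"
        using ae by eventually_elim (use E_pos[of l] in \<open>auto simp: indicator_def split: if_splits\<close>, metis less_irrefl)
    qed
    then show False using k_int by simp
  qed
  then show ?thesis using nn unfolding set_lebesgue_integral_def by simp
qed

lemma bE_eq: "0 \<le> l \<Longrightarrow> (LINT a:{0..}|lborel. b a * E l a) = rf.F l"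
  unfolding rf.F_def
  by (rule set_lebesgue_integral_cong) (auto simp: E_def w_def exp_add[symmetric] algebra_simps)

end

lemma tot_cong: "(\<And>a. 0 \<le> a \<Longrightarrow> m a = n a) \<Longrightarrow> tot m = tot n"
  unfolding tot_def by (rule set_lebesgue_integral_cong) auto

lemma steady_cong:
  assumes mn: "\<And>a. 0 \<le> a \<Longrightarrow> m a = n a"
  shows "is_steady_state k b d eta1 eta2 c1 c2 ct1 ct2 m N2 = is_steady_state k b d eta1 eta2 c1 c2 ct1 ct2 n N2"
proof -
  have t: "tot m = tot n" by (rule tot_cong[OF mn])
  have i: "set_integrable lborel {0..} m = set_integrable lborel {0..} n"
    by (rule set_integrable_cong) (auto simp: mn)
  have e1: "(LINT u:{0..a}|lborel. (k u + (eta1 + c1) * tot n + (eta2 + c2) * N2) * m u)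
      = (LINT u:{0..a}|lborel. (k u + (eta1 + c1) * tot n + (eta2 + c2) * N2) * n u)" for a
    by (rule set_lebesgue_integral_cong) (auto simp: mn)
  have e2: "(LINT a:{0..}|lborel. b a * m a) = (LINT a:{0..}|lborel. b a * n a)"
    by (rule set_lebesgue_integral_cong) (auto simp: mn)
  have e3: "(LINT a:{0..}|lborel. (k a + eta1 * tot n + eta2 * N2) * m a)
      = (LINT a:{0..}|lborel. (k a + eta1 * tot n + eta2 * N2) * n a)"
    by (rule set_lebesgue_integral_cong) (auto simp: mn)
  have "(\<forall>a\<ge>0. m a = m 0 - (LINT u:{0..a}|lborel. (k u + (eta1 + c1) * tot n + (eta2 + c2) * N2) * m u))
     = (\<forall>a\<ge>0. n a = n 0 - (LINT u:{0..a}|lborel. (k u + (eta1 + c1) * tot n + (eta2 + c2) * N2) * n u))"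
    using mn e1 by auto
  then show ?thesis unfolding is_steady_state_def t i e2 e3 using mn[of 0] by simp
qed

context model
begin

lemma tot_E: "tot (\<lambda>a. c * E l a) = c * I l"
  unfolding tot_def I_def by simp

lemma volt_int: "0 \<le> l \<Longrightarrow> 0 \<le> a \<Longrightarrow>
    (LINT u:{0..a}|lborel. (k u + l) * (c * E l u)) = c * (1 - E l a)"
proof -
  assume l: "0 \<le> l" and a: "0 \<le> a"
  have "(LINT u:{0..a}|lborel. (k u + l) * (c * E l u)) = (LINT u:{0..a}|lborel. c * ((k u + l) * E l u))"
    by (simp only: mult.left_commute)
  also have "\<dots> = c * (LINT u:{0..a}|lborel. (k u + l) * E l u)"
    by (simp only: set_integral_mult_right)
  finally have "(LINT u:{0..a}|lborel. (k u + l) * (c * E l u)) = c * (LINT u:{0..a}|lborel. (k u + l) * E l u)" .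
  then show ?thesis using E_ident[OF l a] by simp
qed

lemma b_int: "0 \<le> l \<Longrightarrow> (LINT a:{0..}|lborel. b a * (c * E l a)) = c * rf.F l"
proof -
  assume l: "0 \<le> l"
  have "(LINT a:{0..}|lborel. b a * (c * E l a)) = c * (LINT a:{0..}|lborel. b a * E l a)"
    by (simp add: algebra_simps)
  then show ?thesis using bE_eq[OF l] by simp
qed

lemma lin_int: "0 < l \<Longrightarrow>
   (LINT a:{0..}|lborel. (k a + e) * (c * E l a)) = c * (1 - l * I l) + e * (c * I l)"
proof -
  assume l: "0 < l"
  have "(LINT a:{0..}|lborel. (k a + e) * (c * E l a)) = (LINT a:{0..}|lborel. c * (k a * E l a) + (e * c) * E l a)"
    by (rule set_lebesgue_integral_cong) (auto simp: algebra_simps)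
  also have "\<dots> = c * (LINT a:{0..}|lborel. k a * E l a) + (e * c) * I l"
    using set_integral_add(2)[OF set_integrable_mult_right[OF kE_int[OF l]] set_integrable_mult_right[OF E_tail(1)[OF l]]]
    by (simp add: I_def)
  finally show ?thesis using kE_eq[OF l] by simp
qed

theorem main:
  fixes d eta1 eta2 c1 c2 ct1 ct2 :: real
  assumes d_pos: "d > 0"
    and params: "eta1 \<ge> 0" "eta2 \<ge> 0" "c1 \<ge> 0" "c2 \<ge> 0" "ct1 \<ge> 0" "ct2 \<ge> 0"
    and c1tot_pos: "eta1 + c1 > 0"
  shows "\<exists>n1 N2.
     is_steady_state k b d eta1 eta2 c1 c2 ct1 ct2 n1 N2 \<and> nonneg_nontrivial n1 N2 \<and>
     (\<forall>m1 M2. is_steady_state k b d eta1 eta2 c1 c2 ct1 ct2 m1 M2 \<and> nonneg_nontrivial m1 M2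
        \<longrightarrow> (\<forall>a\<ge>0. m1 a = n1 a) \<and> M2 = N2) \<and>
     ((d > 0 \<or> ct2 > 0) \<longrightarrow> tot n1 > 0) \<and>
     ((\<not> (AE a in lborel. a \<ge> 0 \<longrightarrow> k a = 0) \<or> eta1 > 0) \<longrightarrow> N2 > 0)"
proof -
  obtain lam where lam: "0 < lam" "rf.F lam = 1" using rf.F_root by blast
  define Is where "Is = I lam"
  have Is: "0 < Is" using I_pos[OF lam(1)] by (simp add: Is_def)
  define A where "A = 1 / Is - lam"
  have "0 < 1 - lam * Is" using kE_pos[OF lam(1)] kE_eq[OF lam(1)] by (simp add: Is_def)
  then have A: "0 < A" using Is by (simp add: A_def field_simps)
  have cA: "x / Is * (1 - lam * Is) = A * x" for x using Is by (simp add: A_def field_simps)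
  interpret qd: quad "eta1 + c1" "eta2 + c2" lam A d eta1 eta2 ct1 ct2
    by unfold_locales (use params c1tot_pos lam A d_pos in auto)
  obtain x0 y0 where xy: "0 < x0" "0 < y0" "(eta1 + c1) * x0 + (eta2 + c2) * y0 = lam" "qd.Phi x0 y0 = 0"
    using qd.exists by blast
  define c where "c = x0 / Is"
  have c: "0 < c" using xy Is by (simp add: c_def)
  define n1 where "n1 a = c * E lam a" for a
  have tot_n1: "tot n1 = x0" using tot_E[of c lam] Is by (simp add: n1_def[abs_def] c_def Is_def)
  have steady: "is_steady_state k b d eta1 eta2 c1 c2 ct1 ct2 n1 y0"
    unfolding is_steady_state_def
  proof (intro conjI allI impI)
    show "set_integrable lborel {0..} n1"
      unfolding n1_def by (rule set_integrable_mult_right[OF E_tail(1)[OF lam(1)]])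
    fix a :: real assume a: "0 \<le> a"
    have "(LINT u:{0..a}|lborel. (k u + (eta1 + c1) * tot n1 + (eta2 + c2) * y0) * n1 u)
        = (LINT u:{0..a}|lborel. (k u + lam) * (c * E lam u))"
      using xy(3) by (simp add: tot_n1 n1_def add.assoc)
    also have "\<dots> = c * (1 - E lam a)" using volt_int[OF _ a] lam by simp
    finally show "n1 a = n1 0 - (LINT u:{0..a}|lborel. (k u + (eta1 + c1) * tot n1 + (eta2 + c2) * y0) * n1 u)"
      by (simp add: n1_def E0 algebra_simps)
  next
    show "n1 0 = (LINT a:{0..}|lborel. b a * n1 a)"
      using b_int[of lam c] lam by (simp add: n1_def E0)
  next
    have "(LINT a:{0..}|lborel. (k a + eta1 * tot n1 + eta2 * y0) * n1 a)
       = c * (1 - lam * Is) + (eta1 * x0 + eta2 * y0) * (c * Is)"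
      using lin_int[OF lam(1), of "eta1 * x0 + eta2 * y0" c] by (simp add: tot_n1 n1_def add.assoc Is_def)
    also have "\<dots> = A * x0 + (eta1 * x0 + eta2 * y0) * x0"
      using cA[of x0] Is by (simp add: c_def)
    finally show "0 = - (d + ct1 * tot n1 + ct2 * y0) * y0 + (LINT a:{0..}|lborel. (k a + eta1 * tot n1 + eta2 * y0) * n1 a)"
      using xy(4) by (simp add: qd.Phi_def tot_n1 algebra_simps)
  qed
  have nn: "nonneg_nontrivial n1 y0"
    unfolding nonneg_nontrivial_def using c xy E_pos[of lam] E0[of lam]
    by (auto simp: n1_def less_imp_le)
  have uniq: "(\<forall>a\<ge>0. m1 a = n1 a) \<and> M2 = y0"
    if st: "is_steady_state k b d eta1 eta2 c1 c2 ct1 ct2 m1 M2" and mn: "nonneg_nontrivial m1 M2" for m1 M2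
  proof -
    have m1nn: "\<And>a. 0 \<le> a \<Longrightarrow> 0 \<le> m1 a" and M2: "0 \<le> M2" and nt: "\<not> ((\<forall>a\<ge>0. m1 a = 0) \<and> M2 = 0)"
      using mn unfolding nonneg_nontrivial_def by auto
    have mi: "set_integrable lborel {0..} m1" using st unfolding is_steady_state_def by blast
    have X0: "0 \<le> tot m1" unfolding tot_def set_lebesgue_integral_def
      by (rule Bochner_Integration.integral_nonneg) (auto simp: m1nn indicator_def)
    define l where "l = (eta1 + c1) * tot m1 + (eta2 + c2) * M2"
    have l0: "0 \<le> l" using X0 M2 params by (simp add: l_def)
    have eqm: "m1 a = m1 0 - (LINT u:{0..a}|lborel. (k u + l) * m1 u)" if "0 \<le> a" for a
      using st that unfolding is_steady_state_def l_def by (simp add: add.assoc)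
    define c' where "c' = m1 0"
    have mE: "m1 a = c' * E l a" if "0 \<le> a" for a
      using E_unique[OF l0 mi eqm that] by (simp add: c'_def)
    have st': "is_steady_state k b d eta1 eta2 c1 c2 ct1 ct2 (\<lambda>a. c' * E l a) M2"
      using st steady_cong[of m1 "\<lambda>a. c' * E l a", OF mE] by simp
    have totm: "tot m1 = c' * I l" using tot_cong[of m1 "\<lambda>a. c' * E l a", OF mE] tot_E by simp
    have c'0: "0 \<le> c'" using m1nn[of 0] by (simp add: c'_def)
    have c'p: "0 < c'"
    proof (rule ccontr)
      assume "\<not> 0 < c'"
      then have cz: "c' = 0" using c'0 by simp
      have t0: "tot (\<lambda>a. 0) = 0" by (simp add: tot_def)
      have "0 = - (d + ct1 * tot m1 + ct2 * M2) * M2" using st' cz totm t0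
        unfolding is_steady_state_def by simp
      then have "(d + ct2 * M2) * M2 = 0" using totm cz by (simp add: algebra_simps)
      moreover have "0 < d + ct2 * M2" using d_pos params M2 by (simp add: add_pos_nonneg)
      ultimately have "M2 = 0" by simp
      moreover have "\<forall>a\<ge>0. m1 a = 0" using mE cz by simp
      ultimately show False using nt by simp
    qed
    have "c' = c' * rf.F l" using st' b_int[OF l0, of c'] unfolding is_steady_state_def by (simp add: E0)
    then have "rf.F l = 1" using c'p by simp
    then have ll: "l = lam" using rf.F_inj[OF l0 less_imp_le[OF lam(1)]] lam(2) by simp
    define X where "X = tot m1"
    have X: "X = c' * Is" using totm ll by (simp add: X_def Is_def)
    have "0 = - (d + ct1 * X + ct2 * M2) * M2 + (c' * (1 - lam * Is) + (eta1 * X + eta2 * M2) * (c' * Is))"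
      using st' lin_int[OF lam(1), of "eta1 * X + eta2 * M2" c'] totm ll
      unfolding is_steady_state_def by (simp add: X_def Is_def add.assoc tot_E)
    moreover have "c' * (1 - lam * Is) = A * X" using cA[of X] X Is by simp
    ultimately have "qd.Phi X M2 = 0" using X by (simp add: qd.Phi_def algebra_simps)
    moreover have "(eta1 + c1) * X + (eta2 + c2) * M2 = lam" using ll by (simp add: l_def X_def)
    ultimately have "X = x0 \<and> M2 = y0"
      using qd.unique[of X M2 x0 y0] X0 M2 xy by (simp add: X_def)
    then have "c' = c" using X Is by (auto simp: c_def field_simps)
    show ?thesis
    proof (intro conjI allI impI)
      fix a :: real assume a: "0 \<le> a"
      have "m1 a = c' * E l a" by (rule mE[OF a])
      also have "\<dots> = c * E lam a" by (simp only: \<open>c' = c\<close> ll)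
      finally show "m1 a = n1 a" by (simp only: n1_def)
    next
      show "M2 = y0" using \<open>X = x0 \<and> M2 = y0\<close> by blast
    qed
  qed
  have u2: "\<forall>m1 M2. is_steady_state k b d eta1 eta2 c1 c2 ct1 ct2 m1 M2 \<and> nonneg_nontrivial m1 M2
        \<longrightarrow> (\<forall>a\<ge>0. m1 a = n1 a) \<and> M2 = y0"
    using uniq by blast
  have t2: "tot n1 > 0" using tot_n1 xy(1) by simp
  show ?thesis
    by (rule exI[of _ n1], rule exI[of _ y0]) (intro conjI impI steady nn u2 t2 xy(2))
qed

end

theorem theorem7:
  fixes k b :: "real \<Rightarrow> real"
    and d eta1 eta2 c1 c2 ct1 ct2 :: real
  assumes d_pos: "d > 0"
    and k_meas: "set_borel_measurable lborel {0..} k"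
    and b_meas: "set_borel_measurable lborel {0..} b"
    and k_nonneg: "\<forall>a\<ge>0. k a \<ge> 0"
    and b_nonneg: "\<forall>a\<ge>0. b a \<ge> 0"
    and k_bdd: "\<exists>M. \<forall>a\<ge>0. k a \<le> M"
    and b_bdd: "\<exists>M. \<forall>a\<ge>0. b a \<le> M"
    and k_int: "(\<integral>\<^sup>+a\<in>{0..}. ennreal (k a) \<partial>lborel) = \<infinity>"
    and R0_gt: "1 < (\<integral>\<^sup>+a\<in>{0..}. ennreal (b a * exp (- (\<integral>u\<in>{0..a}. k u \<partial>lborel))) \<partial>lborel)"
    and R0_fin: "(\<integral>\<^sup>+a\<in>{0..}. ennreal (b a * exp (- (\<integral>u\<in>{0..a}. k u \<partial>lborel))) \<partial>lborel) < \<infinity>"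
    and params: "eta1 \<ge> 0" "eta2 \<ge> 0" "c1 \<ge> 0" "c2 \<ge> 0" "ct1 \<ge> 0" "ct2 \<ge> 0"
    and c1tot_pos: "eta1 + c1 > 0"
  shows "\<exists>n1 N2.
     is_steady_state k b d eta1 eta2 c1 c2 ct1 ct2 n1 N2 \<and> nonneg_nontrivial n1 N2 \<and>
     (\<forall>m1 M2. is_steady_state k b d eta1 eta2 c1 c2 ct1 ct2 m1 M2 \<and> nonneg_nontrivial m1 M2
        \<longrightarrow> (\<forall>a\<ge>0. m1 a = n1 a) \<and> M2 = N2) \<and>
     ((d > 0 \<or> ct2 > 0) \<longrightarrow> tot n1 > 0) \<and>
     ((\<not> (AE a in lborel. a \<ge> 0 \<longrightarrow> k a = 0) \<or> eta1 > 0) \<longrightarrow> N2 > 0)"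

proof -
  define k' where "k' x = (if 0 \<le> x then k x else 0)" for x
  define b' where "b' x = (if 0 \<le> x then b x else 0)" for x
  obtain Mk where Mk: "\<forall>a\<ge>0. k a \<le> Mk" using k_bdd by blast
  obtain Mb where Mb: "\<forall>a\<ge>0. b a \<le> Mb" using b_bdd by blast
  have km: "k' \<in> borel_measurable borel"
  proof -
    have "(\<lambda>x. indicator {0..} x *\<^sub>R k x) \<in> borel_measurable borel"
      using k_meas unfolding set_borel_measurable_def by simp
    moreover have "(\<lambda>x. indicator {0..} x *\<^sub>R k x) = k'" by (auto simp: k'_def fun_eq_iff indicator_def)
    ultimately show ?thesis by simp
  qed
  have bm: "b' \<in> borel_measurable borel"
  proof -
    have "(\<lambda>x. indicator {0..} x *\<^sub>R b x) \<in> borel_measurable borel"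
      using b_meas unfolding set_borel_measurable_def by simp
    moreover have "(\<lambda>x. indicator {0..} x *\<^sub>R b x) = b'" by (auto simp: b'_def fun_eq_iff indicator_def)
    ultimately show ?thesis by simp
  qed
  have Kc: "(\<integral>u\<in>{0..a}. k' u \<partial>lborel) = (\<integral>u\<in>{0..a}. k u \<partial>lborel)" for a
    by (rule set_lebesgue_integral_cong) (auto simp: k'_def)
  have R0eq: "(\<integral>\<^sup>+a\<in>{0..}. ennreal (b' a * exp (- (\<integral>u\<in>{0..a}. k' u \<partial>lborel))) \<partial>lborel)
      = (\<integral>\<^sup>+a\<in>{0..}. ennreal (b a * exp (- (\<integral>u\<in>{0..a}. k u \<partial>lborel))) \<partial>lborel)"
    by (rule nn_integral_cong) (auto simp: b'_def Kc indicator_def)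
  have kint: "(\<integral>\<^sup>+a\<in>{0..}. ennreal (k' a) \<partial>lborel) = (\<integral>\<^sup>+a\<in>{0..}. ennreal (k a) \<partial>lborel)"
    by (rule nn_integral_cong) (auto simp: k'_def indicator_def)
  interpret md: model k' b' Mk Mb
  proof unfold_locales
    show "0 \<le> k' x" for x using k_nonneg by (simp add: k'_def)
    have "0 \<le> Mk" using Mk k_nonneg by (meson order.refl order.trans)
    then show "k' x \<le> Mk" for x using Mk by (simp add: k'_def)
    show "0 \<le> b' x" for x using b_nonneg by (simp add: b'_def)
    have "0 \<le> Mb" using Mb b_nonneg by (meson order.refl order.trans)
    then show "b' x \<le> Mb" for x using Mb by (simp add: b'_def)
    show "k' \<in> borel_measurable borel" by (rule km)
    show "b' \<in> borel_measurable borel" by (rule bm)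
    show "(\<integral>\<^sup>+a\<in>{0..}. ennreal (k' a) \<partial>lborel) = \<infinity>" using kint k_int by simp
    show "1 < (\<integral>\<^sup>+a\<in>{0..}. ennreal (b' a * exp (- (\<integral>u\<in>{0..a}. k' u \<partial>lborel))) \<partial>lborel)"
      unfolding R0eq by (rule R0_gt)
    show "(\<integral>\<^sup>+a\<in>{0..}. ennreal (b' a * exp (- (\<integral>u\<in>{0..a}. k' u \<partial>lborel))) \<partial>lborel) < \<infinity>"
      unfolding R0eq by (rule R0_fin)
  qed
  have steq: "is_steady_state k' b' d eta1 eta2 c1 c2 ct1 ct2 n N = is_steady_state k b d eta1 eta2 c1 c2 ct1 ct2 n N"
    for n N
  proof -
    have e1: "(\<integral>u\<in>{0..a}. (k' u + (eta1 + c1) * tot n + (eta2 + c2) * N) * n u \<partial>lborel)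
      = (\<integral>u\<in>{0..a}. (k u + (eta1 + c1) * tot n + (eta2 + c2) * N) * n u \<partial>lborel)" for a
      by (rule set_lebesgue_integral_cong) (auto simp: k'_def)
    have e2: "(\<integral>a\<in>{0..}. b' a * n a \<partial>lborel) = (\<integral>a\<in>{0..}. b a * n a \<partial>lborel)"
      by (rule set_lebesgue_integral_cong) (auto simp: b'_def)
    have e3: "(\<integral>a\<in>{0..}. (k' a + eta1 * tot n + eta2 * N) * n a \<partial>lborel)
      = (\<integral>a\<in>{0..}. (k a + eta1 * tot n + eta2 * N) * n a \<partial>lborel)"
      by (rule set_lebesgue_integral_cong) (auto simp: k'_def)
    show ?thesis unfolding is_steady_state_def e1 e2 e3 ..
  qed
  have aeq: "(AE a in lborel. a \<ge> 0 \<longrightarrow> k' a = 0) = (AE a in lborel. a \<ge> 0 \<longrightarrow> k a = 0)"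
    by (rule arg_cong[where f="\<lambda>P. AE a in lborel. P a"]) (auto simp: k'_def fun_eq_iff)
  show ?thesis
    using md.main[OF d_pos params c1tot_pos] unfolding steq aeq .
qed

end
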